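(* Let $F$ be a field of characteristic $\neq 2,3$, $V$ an $F$-vector space and $f$ a symmetric bilinear form on $V$. The Jordan algebra $J(V,f)$ admits a derivation with invertible values if and only if there exist $x, y \in V$ such that $f(x,x)\neq 0$, $f(y,y)\neq 0$, $f(x,y)=0$, and $-\frac{f(y,y)}{f(x,x)}$ is not a square in $F$.
   Context: $J(V,f)$ is the vector space $F\oplus V$ with multiplication $(\alpha+v)(\beta+u) = \alpha\beta + f(v,u) + \alpha u + \beta v$ for $\alpha,\beta\in F$, $u,v\in V$; it is a unital Jordan algebra. An element $x$ of a unital Jordan algebra $J$ is invertible if there exists $y\in J$ with $xy=1$, $x^2y=x$. A derivation with invertible values of $J$ is a nonzero derivation $d$ of $J$ such that for every $x \in J$, $d(x)$ is either invertible or equal to $0$. *)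

theory Defs
  imports Complex_Main "HOL-Library.Product_Plus"
begin

text \<open>The Jordan algebra J(V,f) = F \<oplus> V, elements represented as pairs (alpha, v).\<close>

definition jmult :: "('a::field \<Rightarrow> 'v::ab_group_add \<Rightarrow> 'v) \<Rightarrow> ('v \<Rightarrow> 'v \<Rightarrow> 'a)
    \<Rightarrow> 'a \<times> 'v \<Rightarrow> 'a \<times> 'v \<Rightarrow> 'a \<times> 'v" where
  "jmult scale f x y = (fst x * fst y + f (snd x) (snd y),
                        scale (fst x) (snd y) + scale (fst y) (snd x))"

definition jone :: "'a::field \<times> 'v::ab_group_add" where
  "jone = (1, 0)"

definition jscale :: "('a::field \<Rightarrow> 'v::ab_group_add \<Rightarrow> 'v) \<Rightarrow> 'a \<Rightarrow> 'a \<times> 'v \<Rightarrow> 'a \<times> 'v" where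
  "jscale scale c x = (c * fst x, scale c (snd x))"

definition jinvertible :: "('a::field \<Rightarrow> 'v::ab_group_add \<Rightarrow> 'v) \<Rightarrow> ('v \<Rightarrow> 'v \<Rightarrow> 'a)
    \<Rightarrow> 'a \<times> 'v \<Rightarrow> bool" where
  "jinvertible scale f x \<longleftrightarrow>
     (\<exists>y. jmult scale f x y = jone \<and> jmult scale f (jmult scale f x x) y = x)"

definition jderivation :: "('a::field \<Rightarrow> 'v::ab_group_add \<Rightarrow> 'v) \<Rightarrow> ('v \<Rightarrow> 'v \<Rightarrow> 'a)
    \<Rightarrow> ('a \<times> 'v \<Rightarrow> 'a \<times> 'v) \<Rightarrow> bool" where
  "jderivation scale f d \<longleftrightarrow>
     (\<forall>x y. d (x + y) = d x + d y) \<and>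
     (\<forall>c x. d (jscale scale c x) = jscale scale c (d x)) \<and>
     (\<forall>x y. d (jmult scale f x y) = jmult scale f (d x) y + jmult scale f x (d y))"

definition derivation_inv_values :: "('a::field \<Rightarrow> 'v::ab_group_add \<Rightarrow> 'v) \<Rightarrow> ('v \<Rightarrow> 'v \<Rightarrow> 'a)
    \<Rightarrow> ('a \<times> 'v \<Rightarrow> 'a \<times> 'v) \<Rightarrow> bool" where
  "derivation_inv_values scale f d \<longleftrightarrow>
     jderivation scale f d \<and> d \<noteq> (\<lambda>_. 0) \<and>
     (\<forall>x. d x = 0 \<or> jinvertible scale f (d x))"

end

theory Submission
  imports Defs
begin

lemma sq_aux:
  fixes p q a b :: "'a::field"
  assumes "p*p*b = - (q*q*a)" "q \<noteq> 0" "a \<noteq> 0" "b \<noteq> 0"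
  shows "(p/q*(b/a))*(p/q*(b/a)) = - (b/a)"
proof -
  have "(p/q*(b/a))*(p/q*(b/a)) = (p*p*b)*b/(q*q*a*a)" by (simp add: field_simps)
  also have "\<dots> = - (q*q*a)*b/(q*q*a*a)" using assms(1) by simp
  also have "\<dots> = - (b/a)" using assms(2,3) by (simp add: field_simps)
  finally show ?thesis .
qed

theorem lemma5:
  fixes scale :: "'a::field \<Rightarrow> 'v::ab_group_add \<Rightarrow> 'v"
    and f :: "'v \<Rightarrow> 'v \<Rightarrow> 'a"
  assumes "Vector_Spaces.vector_space scale"
    and "(2::'a) \<noteq> 0" and "(3::'a) \<noteq> 0"
    and "\<And>u. Vector_Spaces.linear scale (*) (\<lambda>v. f u v)"
    and "\<And>u v. f u v = f v u"
  shows "(\<exists>d. derivation_inv_values scale f d) \<longleftrightarrow>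
         (\<exists>x y. f x x \<noteq> 0 \<and> f y y \<noteq> 0 \<and> f x y = 0 \<and>
                \<not> (\<exists>t. t * t = - (f y y / f x x)))"
proof -
  interpret vs: vector_space scale by fact
  note sym = assms(5)
  have fadd: "f u (a + b) = f u a + f u b" for u a b
    using assms(4)[of u] unfolding Vector_Spaces.linear_iff by auto
  have fsc: "f u (scale c b) = c * f u b" for u c b
    using assms(4)[of u] unfolding Vector_Spaces.linear_iff by auto
  have f0: "f u 0 = 0" for u using fsc[of u 0 0] by simp
  have f0': "f 0 u = 0" for u using f0 sym by metis
  have fdiff: "f u (a - b) = f u a - f u b" for u a b
    using fadd[of u "a - b" b] by (simp add: algebra_simps)
  have faddl: "f (a + b) u = f a u + f b u" for u a b
    using fadd sym by metis
  have fscl: "f (scale c b) u = c * f b u" for u c b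
    using fsc sym by metis
  have fdiffl: "f (a - b) u = f a u - f b u" for u a b
    using fdiff sym by metis
  have inv1: "f w w \<noteq> 0" if "jinvertible scale f (0, w)" for w
  proof
    assume h: "f w w = 0"
    from that obtain y where y1: "jmult scale f (0, w) y = jone"
      and y2: "jmult scale f (jmult scale f (0, w) (0, w)) y = (0, w)"
      unfolding jinvertible_def by blast
    have "jmult scale f (0, w) (0, w) = (0, 0)" using h
      by (simp add: jmult_def)
    with y2 have "w = 0" by (simp add: jmult_def f0')
    with y1 show False by (simp add: jmult_def jone_def f0')
  qed
  have inv2: "jinvertible scale f (0, w)" if "f w w \<noteq> 0" for w
  proof -
    let ?y = "(0::'a, scale (1 / f w w) w)"
    have "jmult scale f (0, w) ?y = jone"
      using that by (simp add: jmult_def jone_def fsc)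
    moreover have "jmult scale f (jmult scale f (0, w) (0, w)) ?y = (0, w)"
      using that by (simp add: jmult_def f0')
    ultimately show ?thesis unfolding jinvertible_def by blast
  qed
  show ?thesis
  proof
    assume "\<exists>d. derivation_inv_values scale f d"
    then obtain d where dadd: "\<And>x y. d (x + y) = d x + d y"
      and dsc: "\<And>c x. d (jscale scale c x) = jscale scale c (d x)"
      and dmul: "\<And>x y. d (jmult scale f x y) = jmult scale f (d x) y + jmult scale f x (d y)"
      and dnz: "d \<noteq> (\<lambda>_. 0)"
      and dinv: "\<And>x. d x = 0 \<or> jinvertible scale f (d x)"
      unfolding derivation_inv_values_def jderivation_def by blast
    have d0: "d 0 = 0" using dadd[of 0 0] by simp
    have d1: "d (1, 0) = 0"
    proof -
      have "jmult scale f (1, 0) (1, 0) = (1, 0)" by (simp add: jmult_def f0)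
      then have "d (1,0) = jmult scale f (d (1,0)) (1, 0) + jmult scale f (1, 0) (d (1,0))"
        using dmul[of "(1,0)" "(1,0)"] by simp
      also have "\<dots> = d (1,0) + d (1,0)"
        by (cases "d (1,0)") (simp add: jmult_def f0 f0')
      finally show ?thesis by simp
    qed
    have dal: "d (\<alpha>, 0) = 0" for \<alpha>
    proof -
      have "(\<alpha>, 0) = jscale scale \<alpha> (1, 0)" by (simp add: jscale_def)
      then show ?thesis using dsc[of \<alpha> "(1,0)"] d1 by (simp add: jscale_def zero_prod_def)
    qed
    have dsplit: "d (\<alpha>, v) = d (0, v)" for \<alpha> v
      using dadd[of "(\<alpha>, 0)" "(0, v)"] dal by simp
    define a where "a v = fst (d (0, v))" for v
    define D where "D v = snd (d (0, v))" for v
    have dav: "d (0, v) = (a v, D v)" for v by (simp add: a_def D_def)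
    have key: "f (D v) u + f v (D u) = 0 \<and> scale (a v) u + scale (a u) v = 0" for u v
    proof -
      have "jmult scale f (0, v) (0, u) = (f v u, 0)" by (simp add: jmult_def)
      then have "d (jmult scale f (0, v) (0, u)) = 0" using dal by simp
      with dmul[of "(0,v)" "(0,u)"] show ?thesis
        by (simp add: dav jmult_def zero_prod_def)
    qed
    have a0: "a v = 0" for v
    proof (cases "v = 0")
      case True then show ?thesis using d0 dav[of 0] by (simp add: zero_prod_def)
    next
      case False
      have "scale (a v) v + scale (a v) v = 0" using key[of v v] by simp
      then have "scale (a v + a v) v = 0" by (simp only: vs.scale_left_distrib)
      with False have "a v + a v = 0" by simp
      then have "2 * a v = 0" by (simp only: mult_2)
      with assms(2) show ?thesis by simp
    qed
    have dv: "d (0, v) = (0, D v)" for v using dav a0 by simp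
    have skew: "f (D v) u + f v (D u) = 0" for u v using key by blast
    have Dadd: "D (u + v) = D u + D v" for u v
      using dadd[of "(0,u)" "(0,v)"] by (simp add: dv)
    have Dsc: "D (scale c v) = scale c (D v)" for c v
      using dsc[of c "(0,v)"] by (simp add: dv jscale_def)
    have anis: "f (D v) (D v) \<noteq> 0" if "D v \<noteq> 0" for v
      using dinv[of "(0,v)"] that inv1 by (auto simp: dv zero_prod_def)
    have "\<exists>p. d p \<noteq> 0"
    proof (rule ccontr)
      assume "\<not> (\<exists>p. d p \<noteq> 0)"
      then have "d = (\<lambda>_. 0)" by auto
      with dnz show False by simp
    qed
    then obtain p where "d p \<noteq> 0" by blast
    then obtain v where Dv: "D v \<noteq> 0"
    proof (cases p)
      case (Pair \<alpha> v)
      assume h: "\<And>v. D v \<noteq> 0 \<Longrightarrow> thesis" "d p \<noteq> 0"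
      have "d p = (0, D v)" using Pair dsplit[of \<alpha> v] dv[of v] by simp
      with h(2) have "D v \<noteq> 0" by (auto simp: zero_prod_def)
      with h(1) show thesis by blast
    qed
    define w where "w = D v"
    define z where "z = D w"
    have fww: "f w w \<noteq> 0" using anis Dv w_def by blast
    have "f z v = - f w w" using skew[of w v] unfolding z_def w_def by (simp add: eq_neg_iff_add_eq_0)
    then have "z \<noteq> 0" using fww f0' by auto
    then have fzz: "f z z \<noteq> 0" using anis z_def by blast
    have "f z w + f w z = 0" using skew[of w w] z_def by simp
    then have "f w z + f w z = 0" using sym[of z w] by simp
    then have "2 * f w z = 0" by (simp only: mult_2)
    then have fwz: "f w z = 0" using assms(2) by simp
    have ns: "\<not> (\<exists>t. t * t = - (f z z / f w w))"
    proof
      assume "\<exists>t. t * t = - (f z z / f w w)"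
      then obtain t where t: "t * t = - (f z z / f w w)" by blast
      define u where "u = scale t v + w"
      have Du: "D u = scale t w + z" unfolding u_def by (simp add: Dadd Dsc w_def z_def)
      have "f (D u) (D u) = t * t * f w w + f z z"
        unfolding Du by (simp add: fadd faddl fsc fscl fwz sym[of z w] algebra_simps)
      also have "\<dots> = 0" using t fww by (simp add: field_simps)
      finally have "D u = 0" using anis by blast
      have "f (scale t w + z) z = f z z" by (simp add: faddl fscl fwz)
      with \<open>D u = 0\<close> Du fzz f0' show False by simp
    qed
    show "\<exists>x y. f x x \<noteq> 0 \<and> f y y \<noteq> 0 \<and> f x y = 0 \<and> \<not> (\<exists>t. t * t = - (f y y / f x x))"
      using fww fzz fwz ns by blast
  next
    assume "\<exists>x y. f x x \<noteq> 0 \<and> f y y \<noteq> 0 \<and> f x y = 0 \<and> \<not> (\<exists>t. t * t = - (f y y / f x x))"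
    then obtain x y where fxx: "f x x \<noteq> 0" and fyy: "f y y \<noteq> 0" and fxy: "f x y = 0"
      and ns: "\<not> (\<exists>t. t * t = - (f y y / f x x))" by blast
    define D where "D v = scale (f x v) y - scale (f y v) x" for v
    define d where "d p = ((0::'a), D (snd p))" for p :: "'a \<times> 'v"
    have Dadd: "D (u + v) = D u + D v" for u v
      unfolding D_def by (simp add: fadd vs.scale_left_distrib algebra_simps)
    have Dsc: "D (scale c v) = scale c (D v)" for c v
      unfolding D_def by (simp add: fsc vs.scale_right_diff_distrib)
    have skew: "f (D v) u + f v (D u) = 0" for u v
      unfolding D_def by (simp add: fdiff fdiffl fsc fscl sym[of v x] sym[of v y] sym[of y u] sym[of x u] algebra_simps)
    have fyx: "f y x = 0" using fxy sym by metis
    have FD: "f (D v) (D v) = f x v * f x v * f y y + f y v * f y v * f x x" for v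
      unfolding D_def by (simp add: fdiff fdiffl fsc fscl fxy fyx algebra_simps)
    have anis: "f (D v) (D v) \<noteq> 0" if "D v \<noteq> 0" for v
    proof
      assume h: "f (D v) (D v) = 0"
      let ?p = "f x v" and ?q = "f y v"
      show False
      proof (cases "?q = 0")
        case True
        then have "?p * ?p * f y y = 0" using h FD by simp
        then have "?p = 0" using fyy by simp
        with True that show False by (simp add: D_def)
      next
        case False
        have e: "?p * ?p * f y y + ?q * ?q * f x x = 0" using h FD by simp
        have "(?p / ?q * (f y y / f x x)) * (?p / ?q * (f y y / f x x)) = - (f y y / f x x)"
        proof -
          have "?p * ?p * f y y = - (?q * ?q * f x x)" using e by (simp add: eq_neg_iff_add_eq_0)
          then show ?thesis using False fxx fyy by (rule sq_aux)
        qed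
        with ns show False by blast
      qed
    qed
    have "derivation_inv_values scale f d"
      unfolding derivation_inv_values_def jderivation_def
    proof (intro conjI allI)
      fix p q show "d (p + q) = d p + d q" by (simp add: d_def Dadd)
    next
      fix c p show "d (jscale scale c p) = jscale scale c (d p)"
        by (simp add: d_def jscale_def Dsc)
    next
      fix p q :: "'a \<times> 'v"
      obtain \<alpha> v where p: "p = (\<alpha>, v)" by (cases p)
      obtain \<beta> u where q: "q = (\<beta>, u)" by (cases q)
      show "d (jmult scale f p q) = jmult scale f (d p) q + jmult scale f p (d q)"
        using skew[of v u] by (simp add: p q d_def jmult_def Dadd Dsc add.commute)
    next
      have "D x = scale (f x x) y" by (simp add: D_def fyx)
      moreover have "y \<noteq> 0" using fyy f0 by auto
      ultimately have "d (0, x) \<noteq> 0" using fxx by (simp add: d_def zero_prod_def)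
      then show "d \<noteq> (\<lambda>_. 0)" by auto
    next
      fix p show "d p = 0 \<or> jinvertible scale f (d p)"
        using anis inv2 by (auto simp: d_def zero_prod_def)
    qed
    then show "\<exists>d. derivation_inv_values scale f d" by blast
  qed
qed

end
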